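(* Every sequent provable in the calculus $\mathsf{G4iSLt}+(\mathrm{cut})$ is provable in $\mathsf{G4iSLt}$; i.e. the additive cut rule is eliminable from $\mathsf{G4iSLt}+(\mathrm{cut})$.
   Context: Formulas are built by the grammar $\varphi ::= p \mid \bot \mid \varphi\land\varphi \mid \varphi\lor\varphi \mid \varphi\to\varphi \mid \Box\varphi$, with $p$ ranging over a countably infinite set of propositional variables. For a multiset $\Gamma$, $\Box\Gamma=\{\Box\psi:\psi\in\Gamma\}$; a boxed formula is one of the form $\Box\psi$. A sequent is $\Gamma\Rightarrow\chi$ with $\Gamma$ a finite multiset of formulas and $\chi$ a formula. The sequent calculus $\mathsf{G4iSLt}$ has the following rules, where $p$ is a propositional variable and $\Phi$ always denotes a multiset containing no boxed formula: (⊥L) $\bot,\Gamma\Rightarrow\chi$ (no premise); (IdP) $\Gamma,p\Rightarrow p$ (no premise); (∧L) from $\Gamma,\varphi,\psi\Rightarrow\chi$ infer $\Gamma,\varphi\land\psi\Rightarrow\chi$; (∧R) from $\Gamma\Rightarrow\varphi$ and $\Gamma\Rightarrow\psi$ infer $\Gamma\Rightarrow\varphi\land\psi$; (∨L) from $\Gamma,\varphi\Rightarrow\chi$ and $\Gamma,\psi\Rightarrow\chi$ infer $\Gamma,\varphi\lor\psi\Rightarrow\chi$; (∨R$_i$), $i\in\{1,2\}$: from $\Gamma\Rightarrow\varphi_i$ infer $\Gamma\Rightarrow\varphi_1\lor\varphi_2$; (p→L) from $\Gamma,p,\varphi\Rightarrow\chi$ infer $\Gamma,p,p\to\varphi\Rightarrow\chi$;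 (→R) from $\Gamma,\varphi\Rightarrow\psi$ infer $\Gamma\Rightarrow\varphi\to\psi$; (□→L) from $\Phi,\Gamma,\psi,\Box\varphi\Rightarrow\varphi$ and $\Phi,\Box\Gamma,\psi\Rightarrow\chi$ infer $\Phi,\Box\Gamma,\Box\varphi\to\psi\Rightarrow\chi$; (SLtR) from $\Phi,\Gamma,\Box\varphi\Rightarrow\varphi$ infer $\Phi,\Box\Gamma\Rightarrow\Box\varphi$; (∧→L) from $\Gamma,\varphi\to(\psi\to\chi)\Rightarrow\delta$ infer $\Gamma,(\varphi\land\psi)\to\chi\Rightarrow\delta$; (∨→L) from $\Gamma,\varphi\to\chi,\psi\to\chi\Rightarrow\delta$ infer $\Gamma,(\varphi\lor\psi)\to\chi\Rightarrow\delta$; (→→L) from $\Gamma,\psi\to\chi\Rightarrow\varphi\to\psi$ and $\Gamma,\chi\Rightarrow\delta$ infer $\Gamma,(\varphi\to\psi)\to\chi\Rightarrow\delta$. A proof of a sequent $S$ is a finite tree of sequents with root $S$ in which each interior node together with its children forms an instance of a rule (conclusion, premises) and each leaf is the conclusion of a premise-free rule; $S$ is provable if it has a proof. The calculus $\mathsf{G4iSLt}+(\mathrm{cut})$ consists of all rules of $\mathsf{G4iSLt}$ together with the additive cut rule: from $\Gamma\Rightarrow\varphi$ and $\varphi,\Gamma\Rightarrow\chi$ infer $\Gamma\Rightarrow\chi$ (for arbitrary finite multiset $\Gamma$ and formulas $\varphi,\chi$). *)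

theory Defs
  imports Main "HOL-Library.Multiset"
begin

datatype fm = Var nat | Bot | And fm fm | Or fm fm | Imp fm fm | Box fm

definition is_boxed :: "fm \<Rightarrow> bool" where
  "is_boxed A \<longleftrightarrow> (\<exists>B. A = Box B)"

definition box_free :: "fm multiset \<Rightarrow> bool" where
  "box_free \<Phi> \<longleftrightarrow> (\<forall>A\<in>#\<Phi>. \<not> is_boxed A)"

abbreviation boxes :: "fm multiset \<Rightarrow> fm multiset" where
  "boxes \<Gamma> \<equiv> image_mset Box \<Gamma>"

inductive G4iSLt :: "fm multiset \<Rightarrow> fm \<Rightarrow> bool" where
  BotL: "G4iSLt (add_mset Bot \<Gamma>) C"
| IdP: "G4iSLt (add_mset (Var p) \<Gamma>) (Var p)"
| AndL: "G4iSLt (add_mset A (add_mset B \<Gamma>)) C \<Longrightarrow> G4iSLt (add_mset (And A B) \<Gamma>) C"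
| AndR: "G4iSLt \<Gamma> A \<Longrightarrow> G4iSLt \<Gamma> B \<Longrightarrow> G4iSLt \<Gamma> (And A B)"
| OrL: "G4iSLt (add_mset A \<Gamma>) C \<Longrightarrow> G4iSLt (add_mset B \<Gamma>) C \<Longrightarrow> G4iSLt (add_mset (Or A B) \<Gamma>) C"
| OrR1: "G4iSLt \<Gamma> A \<Longrightarrow> G4iSLt \<Gamma> (Or A B)"
| OrR2: "G4iSLt \<Gamma> B \<Longrightarrow> G4iSLt \<Gamma> (Or A B)"
| VarImpL: "G4iSLt (add_mset (Var p) (add_mset A \<Gamma>)) C \<Longrightarrow>
            G4iSLt (add_mset (Var p) (add_mset (Imp (Var p) A) \<Gamma>)) C"
| ImpR: "G4iSLt (add_mset A \<Gamma>) B \<Longrightarrow> G4iSLt \<Gamma> (Imp A B)"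
| BoxImpL: "box_free \<Phi> \<Longrightarrow>
            G4iSLt (\<Phi> + \<Gamma> + {#B, Box A#}) A \<Longrightarrow>
            G4iSLt (\<Phi> + boxes \<Gamma> + {#B#}) C \<Longrightarrow>
            G4iSLt (\<Phi> + boxes \<Gamma> + {#Imp (Box A) B#}) C"
| SLtR: "box_free \<Phi> \<Longrightarrow>
         G4iSLt (\<Phi> + \<Gamma> + {#Box A#}) A \<Longrightarrow>
         G4iSLt (\<Phi> + boxes \<Gamma>) (Box A)"
| AndImpL: "G4iSLt (add_mset (Imp A (Imp B C)) \<Gamma>) D \<Longrightarrow>
            G4iSLt (add_mset (Imp (And A B) C) \<Gamma>) D"
| OrImpL: "G4iSLt (add_mset (Imp A C) (add_mset (Imp B C) \<Gamma>)) D \<Longrightarrow>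
           G4iSLt (add_mset (Imp (Or A B) C) \<Gamma>) D"
| ImpImpL: "G4iSLt (add_mset (Imp B C) \<Gamma>) (Imp A B) \<Longrightarrow>
            G4iSLt (add_mset C \<Gamma>) D \<Longrightarrow>
            G4iSLt (add_mset (Imp (Imp A B) C) \<Gamma>) D"

inductive G4iSLt_cut :: "fm multiset \<Rightarrow> fm \<Rightarrow> bool" where
  BotL: "G4iSLt_cut (add_mset Bot \<Gamma>) C"
| IdP: "G4iSLt_cut (add_mset (Var p) \<Gamma>) (Var p)"
| AndL: "G4iSLt_cut (add_mset A (add_mset B \<Gamma>)) C \<Longrightarrow> G4iSLt_cut (add_mset (And A B) \<Gamma>) C"
| AndR: "G4iSLt_cut \<Gamma> A \<Longrightarrow> G4iSLt_cut \<Gamma> B \<Longrightarrow> G4iSLt_cut \<Gamma> (And A B)"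
| OrL: "G4iSLt_cut (add_mset A \<Gamma>) C \<Longrightarrow> G4iSLt_cut (add_mset B \<Gamma>) C \<Longrightarrow> G4iSLt_cut (add_mset (Or A B) \<Gamma>) C"
| OrR1: "G4iSLt_cut \<Gamma> A \<Longrightarrow> G4iSLt_cut \<Gamma> (Or A B)"
| OrR2: "G4iSLt_cut \<Gamma> B \<Longrightarrow> G4iSLt_cut \<Gamma> (Or A B)"
| VarImpL: "G4iSLt_cut (add_mset (Var p) (add_mset A \<Gamma>)) C \<Longrightarrow>
            G4iSLt_cut (add_mset (Var p) (add_mset (Imp (Var p) A) \<Gamma>)) C"
| ImpR: "G4iSLt_cut (add_mset A \<Gamma>) B \<Longrightarrow> G4iSLt_cut \<Gamma> (Imp A B)"
| BoxImpL: "box_free \<Phi> \<Longrightarrow>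
            G4iSLt_cut (\<Phi> + \<Gamma> + {#B, Box A#}) A \<Longrightarrow>
            G4iSLt_cut (\<Phi> + boxes \<Gamma> + {#B#}) C \<Longrightarrow>
            G4iSLt_cut (\<Phi> + boxes \<Gamma> + {#Imp (Box A) B#}) C"
| SLtR: "box_free \<Phi> \<Longrightarrow>
         G4iSLt_cut (\<Phi> + \<Gamma> + {#Box A#}) A \<Longrightarrow>
         G4iSLt_cut (\<Phi> + boxes \<Gamma>) (Box A)"
| AndImpL: "G4iSLt_cut (add_mset (Imp A (Imp B C)) \<Gamma>) D \<Longrightarrow>
            G4iSLt_cut (add_mset (Imp (And A B) C) \<Gamma>) D"
| OrImpL: "G4iSLt_cut (add_mset (Imp A C) (add_mset (Imp B C) \<Gamma>)) D \<Longrightarrow>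
           G4iSLt_cut (add_mset (Imp (Or A B) C) \<Gamma>) D"
| ImpImpL: "G4iSLt_cut (add_mset (Imp B C) \<Gamma>) (Imp A B) \<Longrightarrow>
            G4iSLt_cut (add_mset C \<Gamma>) D \<Longrightarrow>
            G4iSLt_cut (add_mset (Imp (Imp A B) C) \<Gamma>) D"
| Cut: "G4iSLt_cut \<Gamma> A \<Longrightarrow> G4iSLt_cut (add_mset A \<Gamma>) C \<Longrightarrow> G4iSLt_cut \<Gamma> C"

end

theory Submission
  imports Defs
begin


record kmodel =
  kW :: "nat list set"
  kle :: "nat list \<Rightarrow> nat list \<Rightarrow> bool"
  kR :: "nat list \<Rightarrow> nat list \<Rightarrow> bool"
  kV :: "nat list \<Rightarrow> nat \<Rightarrow> bool"

fun sat :: "kmodel \<Rightarrow> nat list \<Rightarrow> fm \<Rightarrow> bool" where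
  "sat M w (Var p) = kV M w p"
| "sat M w Bot = False"
| "sat M w (And A B) = (sat M w A \<and> sat M w B)"
| "sat M w (Or A B) = (sat M w A \<or> sat M w B)"
| "sat M w (Imp A B) = (\<forall>v\<in>kW M. kle M w v \<longrightarrow> sat M v A \<longrightarrow> sat M v B)"
| "sat M w (Box A) = (\<forall>v\<in>kW M. kR M w v \<longrightarrow> sat M v A)"

definition good :: "kmodel \<Rightarrow> bool" where
  "good M \<longleftrightarrow> finite (kW M) \<and>
    (\<forall>w\<in>kW M. kle M w w) \<and>
    (\<forall>u v w. kle M u v \<longrightarrow> kle M v w \<longrightarrow> kle M u w) \<and>
    (\<forall>u v. kle M u v \<longrightarrow> u \<in> kW M \<and> v \<in> kW M) \<and>
    (\<forall>u v. kR M u v \<longrightarrow> kle M u v) \<and>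
    (\<forall>u v w. kR M u v \<longrightarrow> kR M v w \<longrightarrow> kR M u w) \<and>
    (\<forall>u. \<not> kR M u u) \<and>
    (\<forall>u v w. kle M u v \<longrightarrow> kR M v w \<longrightarrow> kR M u w) \<and>
    (\<forall>u v p. kle M u v \<longrightarrow> kV M u p \<longrightarrow> kV M v p)"

lemma goodD:
  assumes "good M"
  shows "finite (kW M)" "w\<in>kW M \<Longrightarrow> kle M w w"
    "kle M u v \<Longrightarrow> kle M v x \<Longrightarrow> kle M u x"
    "kle M u v \<Longrightarrow> u \<in> kW M" "kle M u v \<Longrightarrow> v \<in> kW M"
    "kR M u v \<Longrightarrow> kle M u v"
    "kR M u v \<Longrightarrow> kR M v x \<Longrightarrow> kR M u x"
    "\<not> kR M u u"
    "kle M u v \<Longrightarrow> kR M v x \<Longrightarrow> kR M u x"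
    "kle M u v \<Longrightarrow> kV M u p \<Longrightarrow> kV M v p"
  using assms unfolding good_def by blast+

lemma sat_mono: "good M \<Longrightarrow> kle M u v \<Longrightarrow> sat M u A \<Longrightarrow> sat M v A"
proof (induction A arbitrary: u v)
  case (Imp A B)
  show ?case
  proof (simp, intro ballI impI)
    fix x assume "x \<in> kW M" "kle M v x" "sat M x A"
    moreover have "kle M u x" using goodD(3)[OF Imp.prems(1,2) \<open>kle M v x\<close>] .
    ultimately show "sat M x B" using Imp.prems(3) by auto
  qed
next
  case (Box A)
  show ?case
  proof (simp, intro ballI impI)
    fix x assume "x \<in> kW M" "kR M v x"
    moreover have "kR M u x" using goodD(9)[OF Box.prems(1,2) \<open>kR M v x\<close>] .
    ultimately show "sat M x A" using Box.prems(3) by auto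
  qed
qed (auto dest: goodD(10))

lemma good_wf: "good M \<Longrightarrow> wf {(v,u). kR M u v}"
proof -
  assume g: "good M"
  let ?r = "{(v,u). kR M u v}"
  have "?r \<subseteq> kW M \<times> kW M" using goodD(4,5,6)[OF g] by blast
  hence fin: "finite ?r" using goodD(1)[OF g] by (meson finite_SigmaI finite_subset)
  have tr: "trans ?r" unfolding trans_def using goodD(7)[OF g] by blast
  have "acyclic ?r" unfolding acyclic_def trancl_id[OF tr] using goodD(8)[OF g] by blast
  thus ?thesis using fin finite_acyclic_wf by blast
qed

lemma box_true:
  assumes g: "good M" and w: "w \<in> kW M"
    and H: "\<And>u. u \<in> kW M \<Longrightarrow> kR M w u \<Longrightarrow> sat M u (Box A) \<Longrightarrow> sat M u A"
  shows "sat M w (Box A)"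
proof (rule ccontr)
  assume "\<not> sat M w (Box A)"
  then obtain x where x: "x \<in> kW M" "kR M w x" "\<not> sat M x A" by auto
  let ?Q = "{u. u \<in> kW M \<and> kR M w u \<and> \<not> sat M u A}"
  have "x \<in> ?Q" using x by auto
  then obtain u where u: "u \<in> ?Q" and min: "\<And>y. (y,u) \<in> {(v,u). kR M u v} \<Longrightarrow> y \<notin> ?Q"
    using good_wf[OF g] unfolding wf_eq_minimal by blast
  have "sat M u (Box A)"
  proof (simp, intro ballI impI)
    fix y assume "y \<in> kW M" "kR M u y"
    moreover have "kR M w y" using goodD(7)[OF g] u \<open>kR M u y\<close> by blast
    ultimately show "sat M y A" using min[of y] by auto
  qed
  thus False using H u by auto
qed

lemma sat_imp_refl: "good M \<Longrightarrow> w \<in> kW M \<Longrightarrow> sat M w (Imp A B) \<Longrightarrow> sat M w A \<Longrightarrow> sat M w B"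
  using goodD(2) by auto

lemma boxes_succ: "(\<forall>A\<in>#\<Phi> + boxes \<Gamma> + \<Delta>. sat M w A) \<Longrightarrow> kR M w u \<Longrightarrow> u \<in> kW M \<Longrightarrow> \<forall>X\<in>#\<Gamma>. sat M u X"
proof
  fix X assume "\<forall>A\<in>#\<Phi> + boxes \<Gamma> + \<Delta>. sat M w A" "kR M w u" "u \<in> kW M" "X \<in># \<Gamma>"
  moreover have "Box X \<in># \<Phi> + boxes \<Gamma> + \<Delta>" using \<open>X \<in># \<Gamma>\<close> by simp
  ultimately have "sat M w (Box X)" by blast
  thus "sat M u X" using \<open>kR M w u\<close> \<open>u \<in> kW M\<close> by auto
qed

lemma sound: "G4iSLt_cut \<Gamma> C \<Longrightarrow> good M \<Longrightarrow> w \<in> kW M \<Longrightarrow> (\<forall>A\<in>#\<Gamma>. sat M w A) \<Longrightarrow> sat M w C"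
proof (induction arbitrary: w rule: G4iSLt_cut.induct)
  case (VarImpL p A \<Gamma> C)
  have "sat M w A" using sat_imp_refl[OF VarImpL.prems(1,2), of "Var p" A] VarImpL.prems(3) by auto
  then show ?case using VarImpL by auto
next
  case (ImpR A \<Gamma> B)
  show ?case
  proof (simp, intro ballI impI)
    fix v assume v: "v \<in> kW M" "kle M w v" "sat M v A"
    have "\<forall>X\<in>#\<Gamma>. sat M v X" using sat_mono[OF ImpR.prems(1) v(2)] ImpR.prems(3) by auto
    thus "sat M v B" using ImpR.IH[OF ImpR.prems(1) v(1)] v(3) by auto
  qed
next
  case (BoxImpL \<Phi> \<Gamma> B A C)
  have bx: "sat M w (Box A)"
  proof (rule box_true[OF BoxImpL.prems(1,2)])
    fix u assume u: "u \<in> kW M" "kR M w u" "sat M u (Box A)"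
    have le: "kle M w u" using u goodD(6)[OF BoxImpL.prems(1)] by blast
    have "sat M w (Imp (Box A) B)" using BoxImpL.prems(3) by simp
    hence "sat M u (Imp (Box A) B)" using sat_mono[OF BoxImpL.prems(1) le] by blast
    hence "sat M u B" using sat_imp_refl[OF BoxImpL.prems(1) u(1)] u(3) by blast
    moreover have "\<forall>X\<in>#\<Phi>. sat M u X" using sat_mono[OF BoxImpL.prems(1) le] BoxImpL.prems(3) by auto
    moreover have "\<forall>X\<in>#\<Gamma>. sat M u X" using boxes_succ[OF BoxImpL.prems(3)] u by blast
    ultimately show "sat M u A" using BoxImpL.IH(1)[OF BoxImpL.prems(1) u(1)] u(3) by auto
  qed
  have "sat M w B" using bx sat_imp_refl[OF BoxImpL.prems(1,2), of "Box A" B] BoxImpL.prems(3) by auto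
  then show ?case using BoxImpL.IH(2)[OF BoxImpL.prems(1,2)] BoxImpL.prems(3) by auto
next
  case (SLtR \<Phi> \<Gamma> A)
  show ?case
  proof (rule box_true[OF SLtR.prems(1,2)])
    fix u assume u: "u \<in> kW M" "kR M w u" "sat M u (Box A)"
    have le: "kle M w u" using u goodD(6)[OF SLtR.prems(1)] by blast
    have "\<forall>X\<in>#\<Phi>. sat M u X" using sat_mono[OF SLtR.prems(1) le] SLtR.prems(3) by auto
    moreover have "\<forall>X\<in>#\<Gamma>. sat M u X" using boxes_succ[of \<Phi> \<Gamma> "{#}" M w u] SLtR.prems(3) u by simp
    ultimately show "sat M u A" using SLtR.IH[OF SLtR.prems(1) u(1)] u(3) by auto
  qed
next
  case (AndImpL A B C \<Gamma> D)
  have i: "sat M w (Imp (And A B) C)" using AndImpL.prems by auto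
  have "sat M w (Imp A (Imp B C))"
  proof (simp, intro ballI impI)
    fix v x assume v: "v \<in> kW M" "kle M w v" "sat M v A" "x \<in> kW M" "kle M v x" "sat M x B"
    have "sat M x A" using sat_mono[OF AndImpL.prems(1) v(5,3)] .
    moreover have "kle M w x" using goodD(3)[OF AndImpL.prems(1) v(2,5)] .
    ultimately show "sat M x C" using i v by auto
  qed
  then show ?case using AndImpL by auto
next
  case (OrImpL A C B \<Gamma> D)
  have i: "sat M w (Imp (Or A B) C)" using OrImpL.prems by simp
  have "sat M w (Imp A C)" using i by simp
  moreover have "sat M w (Imp B C)" using i by simp
  ultimately show ?case using OrImpL.IH[OF OrImpL.prems(1,2)] OrImpL.prems(3) by simp
next
  case (ImpImpL B C \<Gamma> A D)
  have i: "sat M w (Imp (Imp A B) C)" using ImpImpL.prems by simp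
  have "sat M w (Imp B C)"
  proof (simp only: sat.simps, intro ballI impI)
    fix v assume v: "v \<in> kW M" "kle M w v" "sat M v B"
    have "sat M v (Imp A B)" using sat_mono[OF ImpImpL.prems(1)] v by auto
    thus "sat M v C" using i v by simp
  qed
  hence "sat M w (Imp A B)" using ImpImpL.IH(1)[OF ImpImpL.prems(1,2)] ImpImpL.prems(3) by simp
  hence "sat M w C" using sat_imp_refl[OF ImpImpL.prems(1,2) i] by blast
  then show ?case using ImpImpL.IH(2)[OF ImpImpL.prems(1,2)] ImpImpL.prems(3) by simp
next
  case (Cut \<Gamma> A C)
  then show ?case by simp
next
  case (OrL A \<Gamma> C B)
  then show ?case by auto
qed simp_all



definition rooted :: "kmodel \<Rightarrow> nat list \<Rightarrow> bool" where
  "rooted M r \<longleftrightarrow> r \<in> kW M \<and> (\<forall>v\<in>kW M. kle M r v)"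

definition CM :: "fm multiset \<Rightarrow> fm \<Rightarrow> bool" where
  "CM \<Gamma> C \<longleftrightarrow> (\<exists>M r. good M \<and> rooted M r \<and> (\<forall>A\<in>#\<Gamma>. sat M r A) \<and> \<not> sat M r C)"

definition child :: "fm multiset \<Rightarrow> kmodel \<times> nat list \<times> bool \<Rightarrow> bool" where
  "child \<Gamma> c \<longleftrightarrow> good (fst c) \<and> rooted (fst c) (fst (snd c)) \<and> (\<forall>X\<in>#\<Gamma>. sat (fst c) (fst (snd c)) X)
     \<and> (snd (snd c) \<longrightarrow> (\<forall>G. Box G \<in># \<Gamma> \<longrightarrow> sat (fst c) (fst (snd c)) G))"

definition glue :: "fm multiset \<Rightarrow> (kmodel \<times> nat list \<times> bool) list \<Rightarrow> kmodel" where
  "glue \<Gamma> L =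
   \<lparr> kW = insert [] {i # x | i x. i < length L \<and> x \<in> kW (fst (L!i))},
     kle = (\<lambda>u v. (u = [] \<and> (v = [] \<or> (\<exists>i x. i < length L \<and> v = i#x \<and> x \<in> kW (fst (L!i)))))
                \<or> (\<exists>i x y. i < length L \<and> u = i#x \<and> v = i#y \<and> kle (fst (L!i)) x y)),
     kR = (\<lambda>u v. (u = [] \<and> (\<exists>i y. i < length L \<and> v = i#y \<and> y \<in> kW (fst (L!i)) \<and>
                     (snd (snd (L!i)) \<or> (\<exists>z. kR (fst (L!i)) z y))))
                \<or> (\<exists>i x y. i < length L \<and> u = i#x \<and> v = i#y \<and> kR (fst (L!i)) x y)),
     kV = (\<lambda>u p. (u = [] \<and> Var p \<in># \<Gamma>) \<or> (\<exists>i x. i < length L \<and> u = i#x \<and> kV (fst (L!i)) x p)) \<rparr>"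

lemma glue_simps:
  "kW (glue \<Gamma> L) = insert [] {i # x | i x. i < length L \<and> x \<in> kW (fst (L!i))}"
  "kle (glue \<Gamma> L) [] v = (v = [] \<or> (\<exists>i x. i < length L \<and> v = i#x \<and> x \<in> kW (fst (L!i))))"
  "kle (glue \<Gamma> L) (i#x) v = (\<exists>y. i < length L \<and> v = i#y \<and> kle (fst (L!i)) x y)"
  "kR (glue \<Gamma> L) [] v = (\<exists>i y. i < length L \<and> v = i#y \<and> y \<in> kW (fst (L!i)) \<and>
                     (snd (snd (L!i)) \<or> (\<exists>z. kR (fst (L!i)) z y)))"
  "kR (glue \<Gamma> L) (i#x) v = (\<exists>y. i < length L \<and> v = i#y \<and> kR (fst (L!i)) x y)"
  "kV (glue \<Gamma> L) [] p = (Var p \<in># \<Gamma>)"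
  "kV (glue \<Gamma> L) (i#x) p = (i < length L \<and> kV (fst (L!i)) x p)"
  unfolding glue_def by auto

lemma child_good: "\<forall>c\<in>set L. child \<Gamma> c \<Longrightarrow> i < length L \<Longrightarrow> good (fst (L!i))"
  unfolding child_def by auto

lemma child_rooted: "\<forall>c\<in>set L. child \<Gamma> c \<Longrightarrow> i < length L \<Longrightarrow> rooted (fst (L!i)) (fst (snd (L!i)))"
  unfolding child_def by auto

lemma child_sat: "\<forall>c\<in>set L. child \<Gamma> c \<Longrightarrow> i < length L \<Longrightarrow> X \<in># \<Gamma> \<Longrightarrow> x \<in> kW (fst (L!i))
   \<Longrightarrow> sat (fst (L!i)) x X"
proof -
  assume a: "\<forall>c\<in>set L. child \<Gamma> c" "i < length L" "X \<in># \<Gamma>" "x \<in> kW (fst (L!i))"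
  have c: "child \<Gamma> (L!i)" using a by auto
  hence "sat (fst (L!i)) (fst (snd (L!i))) X" using a(3) unfolding child_def by auto
  moreover have "kle (fst (L!i)) (fst (snd (L!i))) x" using c a(4) unfolding child_def rooted_def by auto
  ultimately show ?thesis using sat_mono c unfolding child_def by blast
qed

lemma glue_good:
  assumes ch: "\<forall>c\<in>set L. child \<Gamma> c"
  shows "good (glue \<Gamma> L)"
proof -
  note gd = goodD[OF child_good[OF ch]]
  let ?G = "glue \<Gamma> L"
  have "kW ?G = insert [] (\<Union>i<length L. (\<lambda>x. i#x) ` kW (fst (L!i)))"
    unfolding glue_simps by auto
  hence f: "finite (kW ?G)" using gd(1) by auto
  have refl: "\<forall>w\<in>kW ?G. kle ?G w w"
    using gd(2) by (auto simp: glue_simps)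
  have trans: "\<forall>u v w. kle ?G u v \<longrightarrow> kle ?G v w \<longrightarrow> kle ?G u w"
  proof (intro allI impI)
    fix u v w assume "kle ?G u v" "kle ?G v w"
    then show "kle ?G u w"
      by (cases u; cases v; cases w) (auto simp: glue_simps dest: gd(3,5))
  qed
  have inW: "\<forall>u v. kle ?G u v \<longrightarrow> u \<in> kW ?G \<and> v \<in> kW ?G"
  proof (intro allI impI)
    fix u v assume "kle ?G u v"
    then show "u \<in> kW ?G \<and> v \<in> kW ?G"
      by (cases u; cases v) (auto simp: glue_simps dest: gd(4,5))
  qed
  have Rle: "\<forall>u v. kR ?G u v \<longrightarrow> kle ?G u v"
  proof (intro allI impI)
    fix u v assume "kR ?G u v"
    then show "kle ?G u v"
      by (cases u; cases v) (auto simp: glue_simps dest: gd(6))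
  qed
  have Rtr: "\<forall>u v w. kR ?G u v \<longrightarrow> kR ?G v w \<longrightarrow> kR ?G u w"
  proof (intro allI impI)
    fix u v w assume a: "kR ?G u v" "kR ?G v w"
    show "kR ?G u w"
    proof (cases u)
      case Nil
      then obtain i y where y: "i < length L" "v = i#y" using a(1) by (auto simp: glue_simps)
      then obtain z where z: "w = i#z" "kR (fst (L!i)) y z" using a(2) by (auto simp: glue_simps)
      have "z \<in> kW (fst (L!i))" using gd(5)[OF y(1) gd(6)[OF y(1) z(2)]] .
      then show ?thesis using Nil y z by (auto simp: glue_simps)
    next
      case (Cons i x)
      then show ?thesis using a by (auto simp: glue_simps) (metis gd(7))
    qed
  qed
  have irr: "\<forall>u. \<not> kR ?G u u"
  proof
    fix u show "\<not> kR ?G u u" by (cases u) (auto simp: glue_simps dest: gd(8))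
  qed
  have leR: "\<forall>u v w. kle ?G u v \<longrightarrow> kR ?G v w \<longrightarrow> kR ?G u w"
  proof (intro allI impI)
    fix u v w assume a: "kle ?G u v" "kR ?G v w"
    show "kR ?G u w"
    proof (cases u)
      case Nil
      show ?thesis
      proof (cases v)
        case Nil
        then show ?thesis using a \<open>u = []\<close> by simp
      next
        case (Cons i y)
        then obtain z where z: "i < length L" "w = i#z" "kR (fst (L!i)) y z" using a(2) by (auto simp: glue_simps)
        have "z \<in> kW (fst (L!i))" using gd(5)[OF z(1) gd(6)[OF z(1) z(3)]] .
        then show ?thesis using Nil z by (auto simp: glue_simps)
      qed
    next
      case (Cons i x)
      then show ?thesis using a by (auto simp: glue_simps) (metis gd(9))
    qed
  qed
  have Vm: "\<forall>u v p. kle ?G u v \<longrightarrow> kV ?G u p \<longrightarrow> kV ?G v p"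
  proof (intro allI impI)
    fix u v p assume a: "kle ?G u v" "kV ?G u p"
    show "kV ?G v p"
    proof (cases u)
      case Nil
      show ?thesis
      proof (cases v)
        case (Cons i y)
        then have y: "i < length L" "y \<in> kW (fst (L!i))" using a(1) Nil by (auto simp: glue_simps)
        have "Var p \<in># \<Gamma>" using a(2) Nil by (simp add: glue_simps)
        then have "sat (fst (L!i)) y (Var p)" using child_sat[OF ch y(1) _ y(2)] by blast
        then show ?thesis using Cons y by (simp add: glue_simps)
      qed (use a Nil in simp)
    next
      case (Cons i x)
      then show ?thesis using a by (auto simp: glue_simps dest: gd(10))
    qed
  qed
  show ?thesis unfolding good_def using f refl trans inW Rle Rtr irr leR Vm by blast
qed

lemma glue_sat:
  assumes ch: "\<forall>c\<in>set L. child \<Gamma> c" and i: "i < length L"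
  shows "x \<in> kW (fst (L!i)) \<Longrightarrow> sat (glue \<Gamma> L) (i#x) A = sat (fst (L!i)) x A"
proof (induction A arbitrary: x)
  note gd = goodD[OF child_good[OF ch i]]
  case (Imp A B)
  show ?case
  proof
    assume h: "sat (glue \<Gamma> L) (i # x) (Imp A B)"
    show "sat (fst (L!i)) x (Imp A B)"
    proof (simp only: sat.simps, intro ballI impI)
      fix y assume y: "y \<in> kW (fst (L!i))" "kle (fst (L!i)) x y" "sat (fst (L!i)) y A"
      have "i#y \<in> kW (glue \<Gamma> L)" "kle (glue \<Gamma> L) (i#x) (i#y)" using y i by (auto simp: glue_simps)
      moreover have "sat (glue \<Gamma> L) (i#y) A" using Imp.IH(1)[OF y(1)] y(3) by simp
      ultimately have "sat (glue \<Gamma> L) (i#y) B" using h by simp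
      thus "sat (fst (L!i)) y B" using Imp.IH(2)[OF y(1)] by simp
    qed
  next
    assume h: "sat (fst (L!i)) x (Imp A B)"
    show "sat (glue \<Gamma> L) (i # x) (Imp A B)"
    proof (simp only: sat.simps, intro ballI impI)
      fix v assume v: "v \<in> kW (glue \<Gamma> L)" "kle (glue \<Gamma> L) (i#x) v" "sat (glue \<Gamma> L) v A"
      then obtain y where y: "v = i#y" "kle (fst (L!i)) x y" by (auto simp: glue_simps)
      have yW: "y \<in> kW (fst (L!i))" using gd(5)[OF y(2)] .
      have "sat (fst (L!i)) y A" using Imp.IH(1)[OF yW] v(3) y(1) by simp
      hence "sat (fst (L!i)) y B" using h yW y(2) by simp
      thus "sat (glue \<Gamma> L) v B" using Imp.IH(2)[OF yW] y(1) by simp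
    qed
  qed
next
  note gd = goodD[OF child_good[OF ch i]]
  case (Box A)
  show ?case
  proof
    assume h: "sat (glue \<Gamma> L) (i # x) (Box A)"
    show "sat (fst (L!i)) x (Box A)"
    proof (simp only: sat.simps, intro ballI impI)
      fix y assume y: "y \<in> kW (fst (L!i))" "kR (fst (L!i)) x y"
      have "i#y \<in> kW (glue \<Gamma> L)" "kR (glue \<Gamma> L) (i#x) (i#y)" using y i by (auto simp: glue_simps)
      hence "sat (glue \<Gamma> L) (i#y) A" using h by simp
      thus "sat (fst (L!i)) y A" using Box.IH[OF y(1)] by simp
    qed
  next
    assume h: "sat (fst (L!i)) x (Box A)"
    show "sat (glue \<Gamma> L) (i # x) (Box A)"
    proof (simp only: sat.simps, intro ballI impI)
      fix v assume v: "v \<in> kW (glue \<Gamma> L)" "kR (glue \<Gamma> L) (i#x) v"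
      then obtain y where y: "v = i#y" "kR (fst (L!i)) x y" by (auto simp: glue_simps)
      have yW: "y \<in> kW (fst (L!i))" using gd(5)[OF gd(6)[OF y(2)]] .
      have "sat (fst (L!i)) y A" using h yW y(2) by simp
      thus "sat (glue \<Gamma> L) v A" using Box.IH[OF yW] y(1) by simp
    qed
  qed
qed (use i in \<open>auto simp: glue_simps\<close>)



lemma glue_root:
  assumes ch: "\<forall>c\<in>set L. child \<Gamma> c"
  shows "rooted (glue \<Gamma> L) []"
   and "\<forall>p. kV (glue \<Gamma> L) [] p \<longleftrightarrow> Var p \<in># \<Gamma>"
   and "\<forall>v\<in>kW (glue \<Gamma> L). v \<noteq> [] \<longrightarrow> (\<forall>X\<in>#\<Gamma>. sat (glue \<Gamma> L) v X)"
   and "\<forall>v. kR (glue \<Gamma> L) [] v \<longrightarrow> (\<forall>A. Box A \<in># \<Gamma> \<longrightarrow> sat (glue \<Gamma> L) v A)"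
   and "c \<in> set L \<Longrightarrow> \<exists>v. kle (glue \<Gamma> L) [] v \<and> (\<forall>A. sat (glue \<Gamma> L) v A \<longleftrightarrow> sat (fst c) (fst (snd c)) A)
          \<and> (snd (snd c) \<longrightarrow> kR (glue \<Gamma> L) [] v)"
proof -
  have gg: "good (glue \<Gamma> L)" using glue_good[OF ch] .
  show "rooted (glue \<Gamma> L) []" unfolding rooted_def by (auto simp: glue_simps)
  show "\<forall>p. kV (glue \<Gamma> L) [] p \<longleftrightarrow> Var p \<in># \<Gamma>" by (simp add: glue_simps)
  show "\<forall>v\<in>kW (glue \<Gamma> L). v \<noteq> [] \<longrightarrow> (\<forall>X\<in>#\<Gamma>. sat (glue \<Gamma> L) v X)"
  proof (intro ballI impI)
    fix v X assume v: "v \<in> kW (glue \<Gamma> L)" "v \<noteq> []" and X: "X \<in># \<Gamma>"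
    then obtain i x where ix: "v = i#x" "i < length L" "x \<in> kW (fst (L!i))" by (auto simp: glue_simps)
    show "sat (glue \<Gamma> L) v X" using glue_sat[OF ch ix(2) ix(3)] child_sat[OF ch ix(2) X ix(3)] ix(1) by simp
  qed
  show "\<forall>v. kR (glue \<Gamma> L) [] v \<longrightarrow> (\<forall>A. Box A \<in># \<Gamma> \<longrightarrow> sat (glue \<Gamma> L) v A)"
  proof (intro allI impI)
    fix v A assume v: "kR (glue \<Gamma> L) [] v" and A: "Box A \<in># \<Gamma>"
    then obtain i y where iy: "i < length L" "v = i#y" "y \<in> kW (fst (L!i))"
         and alt: "snd (snd (L!i)) \<or> (\<exists>z. kR (fst (L!i)) z y)" by (auto simp: glue_simps)
    note gd = goodD[OF child_good[OF ch iy(1)]]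
    have "sat (fst (L!i)) y A"
    proof (cases "snd (snd (L!i))")
      case True
      have c: "child \<Gamma> (L!i)" using ch iy(1) by auto
      hence "sat (fst (L!i)) (fst (snd (L!i))) A" using True A unfolding child_def by auto
      moreover have "kle (fst (L!i)) (fst (snd (L!i))) y" using c iy(3) unfolding child_def rooted_def by auto
      ultimately show ?thesis using sat_mono[OF child_good[OF ch iy(1)]] by blast
    next
      case False
      then obtain z where z: "kR (fst (L!i)) z y" using alt by auto
      have "z \<in> kW (fst (L!i))" using gd(4)[OF gd(6)[OF z]] .
      hence "sat (fst (L!i)) z (Box A)" using child_sat[OF ch iy(1) A] by blast
      thus ?thesis using z iy(3) by simp
    qed
    thus "sat (glue \<Gamma> L) v A" using glue_sat[OF ch iy(1) iy(3)] iy(2) by simp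
  qed
  assume c: "c \<in> set L"
  then obtain i where i: "i < length L" "L!i = c" by (meson in_set_conv_nth)
  have cc: "child \<Gamma> c" using c ch by auto
  hence r: "fst (snd c) \<in> kW (fst c)" unfolding child_def rooted_def by auto
  show "\<exists>v. kle (glue \<Gamma> L) [] v \<and> (\<forall>A. sat (glue \<Gamma> L) v A \<longleftrightarrow> sat (fst c) (fst (snd c)) A)
          \<and> (snd (snd c) \<longrightarrow> kR (glue \<Gamma> L) [] v)"
    apply (rule exI[of _ "i # fst (snd c)"])
    using glue_sat[OF ch i(1), of "fst (snd c)"] i r by (auto simp: glue_simps)
qed

fun okroot :: "kmodel \<Rightarrow> nat list \<Rightarrow> fm \<Rightarrow> bool" where
  "okroot G r (Var p) = True"
| "okroot G r (Box A) = True"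
| "okroot G r (Imp X Y) = (\<not> sat G r X)"
| "okroot G r _ = False"

lemma root_sat:
  assumes g: "good G" and rt: "rooted G r" and V: "\<forall>p. kV G r p \<longleftrightarrow> Var p \<in># \<Gamma>"
    and P2: "\<forall>v\<in>kW G. v \<noteq> r \<longrightarrow> (\<forall>X\<in>#\<Gamma>. sat G v X)"
    and P3: "\<forall>v. kR G r v \<longrightarrow> (\<forall>A. Box A \<in># \<Gamma> \<longrightarrow> sat G v A)"
    and H: "\<forall>X\<in>#\<Gamma>. okroot G r X"
  shows "\<forall>X\<in>#\<Gamma>. sat G r X"
proof
  fix X assume X: "X \<in># \<Gamma>"
  show "sat G r X"
  proof (cases X)
    case (Var p) then show ?thesis using V X by simp
  next
    case (Box A) then show ?thesis using P3 X by simp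
  next
    case (Imp Y Z)
    have nY: "\<not> sat G r Y" using H X Imp by auto
    show ?thesis unfolding Imp sat.simps
    proof (intro ballI impI)
      fix v assume v: "v \<in> kW G" "kle G r v" "sat G v Y"
      have "v \<noteq> r" using nY v by auto
      hence "\<forall>X\<in>#\<Gamma>. sat G v X" using P2 v by blast
      hence "sat G v (Imp Y Z)" using X Imp by blast
      thus "sat G v Z" using sat_imp_refl[OF g v(1) _ v(3)] by blast
    qed
  qed (use H X in auto)
qed

fun unbox :: "fm \<Rightarrow> fm" where
  "unbox (Box A) = A"
| "unbox A = A"

definition nb :: "fm multiset \<Rightarrow> fm multiset" where
  "nb \<Delta> = filter_mset (\<lambda>A. \<not> is_boxed A) \<Delta>"

definition bx :: "fm multiset \<Rightarrow> fm multiset" where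
  "bx \<Delta> = image_mset unbox (filter_mset is_boxed \<Delta>)"

lemma decomp: "\<Delta> = nb \<Delta> + boxes (bx \<Delta>)"
proof -
  have "image_mset (\<lambda>x. Box (unbox x)) (filter_mset is_boxed \<Delta>) = filter_mset is_boxed \<Delta>"
    by (induction \<Delta>) (auto simp: is_boxed_def)
  thus ?thesis unfolding nb_def bx_def by (simp add: image_mset.compositionality o_def)
qed

lemma nb_free: "box_free (nb \<Delta>)"
  unfolding box_free_def nb_def by auto

lemma box_in_bx: "Box G \<in># \<Delta> \<Longrightarrow> G \<in># bx \<Delta>"
  unfolding bx_def by (force simp: is_boxed_def)

lemma sat_decomp:
  assumes g: "good M" and r: "r \<in> kW M" and h: "\<forall>Y\<in># nb \<Delta> + bx \<Delta>. sat M r Y"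
  shows "\<forall>Y\<in>#\<Delta>. sat M r Y"
proof
  fix Y assume Y: "Y \<in># \<Delta>"
  show "sat M r Y"
  proof (cases "is_boxed Y")
    case False
    then have "Y \<in># nb \<Delta>" using Y unfolding nb_def by auto
    then show ?thesis using h by auto
  next
    case True
    then obtain G where G: "Y = Box G" unfolding is_boxed_def by auto
    then have "G \<in># bx \<Delta>" using box_in_bx Y by auto
    then have "sat M r G" using h by auto
    then have "\<forall>v\<in>kW M. kR M r v \<longrightarrow> sat M v G" using sat_mono[OF g] goodD(6)[OF g] by blast
    then show ?thesis using G by simp
  qed
qed



fun okL :: "fm multiset \<Rightarrow> fm \<Rightarrow> bool" where
  "okL \<Gamma> (Var p) = True"
| "okL \<Gamma> (Box A) = True"
| "okL \<Gamma> (Imp (Var p) B) = (Var p \<notin># \<Gamma>)"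
| "okL \<Gamma> (Imp Bot B) = True"
| "okL \<Gamma> (Imp (Imp A B) D) = CM (add_mset A (add_mset (Imp B D) (\<Gamma> - {#Imp (Imp A B) D#}))) B"
| "okL \<Gamma> (Imp (Box A) B) = CM (nb (\<Gamma> - {#Imp (Box A) B#}) + bx (\<Gamma> - {#Imp (Box A) B#}) + {#B, Box A#}) A"
| "okL \<Gamma> _ = False"

fun okR :: "fm multiset \<Rightarrow> fm \<Rightarrow> bool" where
  "okR \<Gamma> (Var p) = (Var p \<notin># \<Gamma>)"
| "okR \<Gamma> Bot = True"
| "okR \<Gamma> (Or A B) = (CM \<Gamma> A \<and> CM \<Gamma> B)"
| "okR \<Gamma> (Box A) = CM (nb \<Gamma> + bx \<Gamma> + {#Box A#}) A"
| "okR \<Gamma> _ = False"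

lemma sat_ImpI: "(\<And>v. v \<in> kW M \<Longrightarrow> kle M w v \<Longrightarrow> sat M v A \<Longrightarrow> sat M v B) \<Longrightarrow> sat M w (Imp A B)"
  by simp

type_synonym chd = "kmodel \<times> nat list \<times> bool"

fun needs :: "fm \<Rightarrow> bool" where
  "needs (Imp (Imp A B) D) = True"
| "needs (Imp (Box A) B) = True"
| "needs _ = False"

fun rq :: "fm \<Rightarrow> chd \<Rightarrow> bool" where
  "rq (Imp (Imp A B) D) = (\<lambda>c. sat (fst c) (fst (snd c)) A \<and> \<not> sat (fst c) (fst (snd c)) B)"
| "rq (Imp (Box A) B) = (\<lambda>c. snd (snd c) \<and> \<not> sat (fst c) (fst (snd c)) A)"
| "rq _ = (\<lambda>c. True)"

fun rqC :: "fm \<Rightarrow> (chd \<Rightarrow> bool) set" where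
  "rqC (Or A B) = {\<lambda>c. \<not> sat (fst c) (fst (snd c)) A, \<lambda>c. \<not> sat (fst c) (fst (snd c)) B}"
| "rqC (Box A) = {\<lambda>c. snd (snd c) \<and> \<not> sat (fst c) (fst (snd c)) A}"
| "rqC _ = {}"

lemma finite_rqC: "finite (rqC C)"
  by (cases C) auto

lemma get_list:
  "finite R \<Longrightarrow> (\<forall>P\<in>R. \<exists>c. child \<Gamma> c \<and> P c) \<Longrightarrow> \<exists>L. (\<forall>c\<in>set L. child \<Gamma> c) \<and> (\<forall>P\<in>R. \<exists>c\<in>set L. P c)"
proof (induction R rule: finite_induct)
  case empty
  then show ?case by (intro exI[of _ "[]"]) auto
next
  case (insert P R)
  then obtain L where L: "\<forall>c\<in>set L. child \<Gamma> c" "\<forall>P\<in>R. \<exists>c\<in>set L. P c" by auto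
  obtain c where c: "child \<Gamma> c" "P c" using insert.prems by auto
  show ?case by (rule exI[of _ "c # L"]) (use L c in auto)
qed

lemma CM_child: "CM \<Delta> A \<Longrightarrow> (\<And>M r. good M \<Longrightarrow> rooted M r \<Longrightarrow> \<forall>Y\<in>#\<Delta>. sat M r Y \<Longrightarrow> \<not> sat M r A \<Longrightarrow> P (M, r, b))
   \<Longrightarrow> (\<And>M r. good M \<Longrightarrow> rooted M r \<Longrightarrow> \<forall>Y\<in>#\<Delta>. sat M r Y \<Longrightarrow> child \<Gamma> (M, r, b))
   \<Longrightarrow> \<exists>c. child \<Gamma> c \<and> P c"
  unfolding CM_def by blast

lemma child_from_imp:
  assumes X: "Imp (Imp A B) D \<in># \<Gamma>" and ok: "okL \<Gamma> (Imp (Imp A B) D)"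
  shows "\<exists>c. child \<Gamma> c \<and> rq (Imp (Imp A B) D) c"
proof -
  let ?\<Delta> = "add_mset A (add_mset (Imp B D) (\<Gamma> - {#Imp (Imp A B) D#}))"
  have cm: "CM ?\<Delta> B" using ok by simp
  then obtain M r where g: "good M" "rooted M r" and h: "\<forall>Y\<in>#?\<Delta>. sat M r Y" and nB: "\<not> sat M r B"
    unfolding CM_def by blast
  have rW: "r \<in> kW M" using g unfolding rooted_def by auto
  have sA: "sat M r A" and sBD: "sat M r (Imp B D)" using h by auto
  have sX: "sat M r (Imp (Imp A B) D)"
  proof (rule sat_ImpI)
    fix v assume v: "v \<in> kW M" "kle M r v" "sat M v (Imp A B)"
    have "sat M v A" using sat_mono[OF g(1) v(2) sA] .
    hence "sat M v B" using sat_imp_refl[OF g(1) v(1) v(3)] by blast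
    moreover have "sat M v (Imp B D)" using sat_mono[OF g(1) v(2) sBD] .
    ultimately show "sat M v D" using sat_imp_refl[OF g(1) v(1)] by blast
  qed
  have "\<forall>Y\<in>#\<Gamma>. sat M r Y"
  proof
    fix Y assume "Y \<in># \<Gamma>"
    show "sat M r Y"
    proof (cases "Y = Imp (Imp A B) D")
      case True then show ?thesis using sX by simp
    next
      case False
      then have "Y \<in># \<Gamma> - {#Imp (Imp A B) D#}" using \<open>Y \<in># \<Gamma>\<close> by (simp add: in_diff_count)
      then show ?thesis using h by auto
    qed
  qed
  then have "child \<Gamma> (M, r, False)" unfolding child_def using g by auto
  moreover have "rq (Imp (Imp A B) D) (M, r, False)" using sA nB by simp
  ultimately show ?thesis by blast
qed

lemma child_from_box:
  assumes cm: "CM (nb \<Gamma>' + bx \<Gamma>' + \<Theta>) A" and \<Gamma>: "\<Gamma> = \<Gamma>' + \<Xi>"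
    and \<Xi>: "\<forall>X\<in>#\<Xi>. \<not> is_boxed X"
    and semX: "\<And>M r. good M \<Longrightarrow> r \<in> kW M \<Longrightarrow> \<forall>Y\<in>#\<Theta>. sat M r Y \<Longrightarrow> \<forall>X\<in>#\<Xi>. sat M r X"
  shows "\<exists>c. child \<Gamma> c \<and> snd (snd c) \<and> \<not> sat (fst c) (fst (snd c)) A"
proof -
  obtain M r where g: "good M" "rooted M r" and h: "\<forall>Y\<in>#nb \<Gamma>' + bx \<Gamma>' + \<Theta>. sat M r Y" and nA: "\<not> sat M r A"
    using cm unfolding CM_def by blast
  have rW: "r \<in> kW M" using g unfolding rooted_def by auto
  have "\<forall>Y\<in>#nb \<Gamma>' + bx \<Gamma>'. sat M r Y" using h by auto
  hence s1: "\<forall>Y\<in>#\<Gamma>'. sat M r Y" using sat_decomp[OF g(1) rW] by blast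
  have s2: "\<forall>X\<in>#\<Xi>. sat M r X" using semX[OF g(1) rW] h by auto
  have s3: "\<forall>G. Box G \<in># \<Gamma> \<longrightarrow> sat M r G"
  proof (intro allI impI)
    fix G assume "Box G \<in># \<Gamma>"
    hence "Box G \<in># \<Gamma>'" using \<Xi> \<Gamma> by (auto simp: is_boxed_def)
    hence "G \<in># bx \<Gamma>'" by (rule box_in_bx)
    thus "sat M r G" using h by auto
  qed
  have "child \<Gamma> (M, r, True)" unfolding child_def using g s1 s2 s3 \<Gamma> by auto
  thus ?thesis using nA by force
qed

lemma CM_child0: "CM \<Gamma> A \<Longrightarrow> \<exists>c. child \<Gamma> c \<and> \<not> sat (fst c) (fst (snd c)) A"
proof -
  assume "CM \<Gamma> A"
  then obtain M r where g: "good M" "rooted M r" "\<forall>Y\<in>#\<Gamma>. sat M r Y" "\<not> sat M r A"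
    unfolding CM_def by blast
  hence "child \<Gamma> (M, r, False)" unfolding child_def by auto
  thus ?thesis using g by force
qed

lemma irred:
  assumes H1: "\<forall>X\<in>#\<Gamma>. okL \<Gamma> X" and H2: "okR \<Gamma> C"
  shows "CM \<Gamma> C"
proof -
  define R where "R = rq ` {X \<in> set_mset \<Gamma>. needs X} \<union> rqC C"
  have fR: "finite R" unfolding R_def using finite_rqC by auto
  have exR: "\<forall>P\<in>R. \<exists>c. child \<Gamma> c \<and> P c"
  proof
    fix P assume "P \<in> R"
    then consider (L) X where "X \<in># \<Gamma>" "needs X" "P = rq X" | (C) "P \<in> rqC C" unfolding R_def by auto
    then show "\<exists>c. child \<Gamma> c \<and> P c"
    proof cases
      case L
      have okX: "okL \<Gamma> X" using H1 L(1) by auto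
      show ?thesis
      proof (cases X)
        case (Imp Y Z)
        show ?thesis
        proof (cases Y)
          case (Imp A B)
          then show ?thesis using child_from_imp L okX \<open>X = Imp Y Z\<close> by auto
        next
          case (Box A)
          let ?X = "Imp (Box A) Z"
          have XX: "X = ?X" using Imp Box by simp
          have cm: "CM (nb (\<Gamma> - {#?X#}) + bx (\<Gamma> - {#?X#}) + {#Z, Box A#}) A" using okX XX by simp
          have "\<exists>c. child \<Gamma> c \<and> snd (snd c) \<and> \<not> sat (fst c) (fst (snd c)) A"
          proof (rule child_from_box[OF cm, of \<Gamma> "{#?X#}"])
            show "\<Gamma> = \<Gamma> - {#?X#} + {#?X#}" using L(1) XX by simp
            show "\<forall>X\<in>#{#?X#}. \<not> is_boxed X" by (simp add: is_boxed_def)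
          next
            fix M r assume g: "good M" "r \<in> kW M" "\<forall>Y\<in>#{#Z, Box A#}. sat M r Y"
            have sZ: "sat M r Z" using g by simp
            have "sat M r ?X"
            proof (rule sat_ImpI)
              fix v assume "v \<in> kW M" "kle M r v" "sat M v (Box A)"
              thus "sat M v Z" using sat_mono[OF g(1) _ sZ] by blast
            qed
            thus "\<forall>X\<in>#{#?X#}. sat M r X" by simp
          qed
          then show ?thesis using L(3) XX by simp
        qed (use L \<open>X = Imp Y Z\<close> in auto)
      qed (use L in auto)
    next
      case C
      show ?thesis
      proof (cases C)
        case (Or A B)
        have cmA: "CM \<Gamma> A" and cmB: "CM \<Gamma> B" using H2 Or by auto
        have "\<exists>c. child \<Gamma> c \<and> \<not> sat (fst c) (fst (snd c)) A" using CM_child0[OF cmA] .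
        moreover have "\<exists>c. child \<Gamma> c \<and> \<not> sat (fst c) (fst (snd c)) B" using CM_child0[OF cmB] .
        moreover have "P = (\<lambda>c. \<not> sat (fst c) (fst (snd c)) A) \<or> P = (\<lambda>c. \<not> sat (fst c) (fst (snd c)) B)"
          using C Or by simp
        ultimately show ?thesis by metis
      next
        case (Box A)
        have cm: "CM (nb \<Gamma> + bx \<Gamma> + {#Box A#}) A" using H2 Box by simp
        have "\<exists>c. child \<Gamma> c \<and> snd (snd c) \<and> \<not> sat (fst c) (fst (snd c)) A"
          by (rule child_from_box[OF cm, of \<Gamma> "{#}"]) auto
        then show ?thesis using C Box by auto
      qed (use C in auto)
    qed
  qed
  obtain L where L: "\<forall>c\<in>set L. child \<Gamma> c" "\<forall>P\<in>R. \<exists>c\<in>set L. P c"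
    using get_list[OF fR exR] by blast
  let ?G = "glue \<Gamma> L"
  note gr = glue_root[OF L(1)]
  have g: "good ?G" using glue_good[OF L(1)] .
  have rW: "[] \<in> kW ?G" using gr(1) unfolding rooted_def by auto
  have sat_child: "\<And>P. P \<in> R \<Longrightarrow> \<exists>c\<in>set L. P c" using L(2) by blast
  have okr: "\<forall>X\<in>#\<Gamma>. okroot ?G [] X"
  proof
    fix X assume X: "X \<in># \<Gamma>"
    have okX: "okL \<Gamma> X" using H1 X by auto
    show "okroot ?G [] X"
    proof (cases X)
      case (Imp Y Z)
      show ?thesis
      proof (cases Y)
        case (Var p) then show ?thesis using okX Imp gr(2) by simp
      next
        case Bot then show ?thesis using Imp by simp
      next
        case (Imp A B)
        have "X \<in> {X \<in> set_mset \<Gamma>. needs X}" using X \<open>X = Imp Y Z\<close> Imp by simp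
        hence "rq X \<in> R" unfolding R_def by blast
        then obtain c where c: "c \<in> set L" "rq X c" using sat_child by blast
        obtain v where v: "kle ?G [] v" "\<forall>A. sat ?G v A \<longleftrightarrow> sat (fst c) (fst (snd c)) A"
          using gr(5)[OF c(1)] by blast
        have "sat ?G v A" "\<not> sat ?G v B" using c(2) v(2) \<open>X = Imp Y Z\<close> Imp by auto
        moreover have "v \<in> kW ?G" using goodD(5)[OF g v(1)] .
        ultimately show ?thesis using \<open>X = Imp Y Z\<close> Imp v(1) by auto
      next
        case (Box A)
        have "X \<in> {X \<in> set_mset \<Gamma>. needs X}" using X \<open>X = Imp Y Z\<close> Box by simp
        hence "rq X \<in> R" unfolding R_def by blast
        then obtain c where c: "c \<in> set L" "rq X c" using sat_child by blast
        obtain v where v: "kle ?G [] v" "\<forall>A. sat ?G v A \<longleftrightarrow> sat (fst c) (fst (snd c)) A"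
             "snd (snd c) \<longrightarrow> kR ?G [] v"
          using gr(5)[OF c(1)] by blast
        have "\<not> sat ?G v A" "kR ?G [] v" using c(2) v(2,3) \<open>X = Imp Y Z\<close> Box by auto
        moreover have "v \<in> kW ?G" using goodD(5)[OF g v(1)] .
        ultimately show ?thesis using \<open>X = Imp Y Z\<close> Box by auto
      qed (use okX Imp in auto)
    qed (use okX in auto)
  qed
  have satG: "\<forall>X\<in>#\<Gamma>. sat ?G [] X"
    using root_sat[OF g gr(1) gr(2) gr(3) gr(4) okr] .
  have nC: "\<not> sat ?G [] C"
  proof (cases C)
    case (Var p) then show ?thesis using H2 gr(2) by simp
  next
    case (Or A B)
    have "(\<lambda>c. \<not> sat (fst c) (fst (snd c)) A) \<in> R" "(\<lambda>c. \<not> sat (fst c) (fst (snd c)) B) \<in> R"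
      unfolding R_def using Or by auto
    then obtain c1 c2 where c: "c1 \<in> set L" "\<not> sat (fst c1) (fst (snd c1)) A"
       "c2 \<in> set L" "\<not> sat (fst c2) (fst (snd c2)) B" using sat_child by blast
    obtain v1 where v1: "kle ?G [] v1" "\<forall>A. sat ?G v1 A \<longleftrightarrow> sat (fst c1) (fst (snd c1)) A"
      using gr(5)[OF c(1)] by blast
    obtain v2 where v2: "kle ?G [] v2" "\<forall>A. sat ?G v2 A \<longleftrightarrow> sat (fst c2) (fst (snd c2)) A"
      using gr(5)[OF c(3)] by blast
    have "\<not> sat ?G [] A" using sat_mono[OF g v1(1)] v1(2) c(2) by blast
    moreover have "\<not> sat ?G [] B" using sat_mono[OF g v2(1)] v2(2) c(4) by blast
    ultimately show ?thesis using Or by simp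
  next
    case (Box A)
    have "(\<lambda>c. snd (snd c) \<and> \<not> sat (fst c) (fst (snd c)) A) \<in> R" unfolding R_def using Box by auto
    then obtain c where c: "c \<in> set L" "snd (snd c)" "\<not> sat (fst c) (fst (snd c)) A" using sat_child by blast
    obtain v where v: "kle ?G [] v" "\<forall>A. sat ?G v A \<longleftrightarrow> sat (fst c) (fst (snd c)) A"
         "snd (snd c) \<longrightarrow> kR ?G [] v"
      using gr(5)[OF c(1)] by blast
    have "v \<in> kW ?G" using goodD(5)[OF g v(1)] .
    then show ?thesis using v c Box by auto
  qed (use H2 in auto)
  show ?thesis unfolding CM_def using g gr(1) satG nC by blast
qed



fun wt :: "fm \<Rightarrow> nat" where
  "wt (Var p) = 1"
| "wt Bot = 1"
| "wt (And A B) = wt A + wt B + 2"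
| "wt (Or A B) = wt A + wt B + 1"
| "wt (Imp A B) = wt A + wt B + 1"
| "wt (Box A) = wt A + 1"

definition meas :: "fm multiset \<Rightarrow> fm \<Rightarrow> nat multiset" where
  "meas \<Gamma> C = image_mset (\<lambda>A. 2 * wt A) \<Gamma> + {#2 * wt C + 1#}"

abbreviation w2 :: "fm multiset \<Rightarrow> nat multiset" where
  "w2 \<Gamma> \<equiv> image_mset (\<lambda>A. 2 * wt A) \<Gamma>"

lemma mdec: "X = I + K \<Longrightarrow> Y = I + J \<Longrightarrow> J \<noteq> {#} \<Longrightarrow> \<forall>k\<in>#K. \<exists>j\<in>#J. k < j \<Longrightarrow> (X, Y) \<in> mult less_than"
  using one_step_implies_mult[of J K less_than I] by auto

definition IHP :: "fm multiset \<Rightarrow> fm \<Rightarrow> bool" where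
  "IHP \<Gamma> C \<longleftrightarrow> (\<forall>\<Gamma>' C'. (meas \<Gamma>' C', meas \<Gamma> C) \<in> mult less_than \<longrightarrow> \<not> G4iSLt \<Gamma>' C' \<longrightarrow> CM \<Gamma>' C')"

lemma IHPD: "IHP \<Gamma> C \<Longrightarrow> (meas \<Gamma>' C', meas \<Gamma> C) \<in> mult less_than \<Longrightarrow> \<not> G4iSLt \<Gamma>' C' \<Longrightarrow> CM \<Gamma>' C'"
  unfolding IHP_def by blast

lemma CM_mono_ant:
  assumes "CM \<Delta> C"
    and "\<And>M r. good M \<Longrightarrow> r \<in> kW M \<Longrightarrow> \<forall>Y\<in>#\<Delta>. sat M r Y \<Longrightarrow> \<forall>Y\<in>#\<Gamma>. sat M r Y"
  shows "CM \<Gamma> C"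
  using assms unfolding CM_def rooted_def by blast

lemma red_And:
  assumes IH: "IHP \<Gamma> C" and np: "\<not> G4iSLt \<Gamma> C" and X: "And A B \<in># \<Gamma>"
  shows "CM \<Gamma> C"
proof -
  obtain \<Gamma>' where G: "\<Gamma> = add_mset (And A B) \<Gamma>'" using multi_member_split[OF X] by blast
  let ?P = "add_mset A (add_mset B \<Gamma>')"
  have "\<not> G4iSLt ?P C" using np G G4iSLt.AndL by blast
  moreover have "(meas ?P C, meas \<Gamma> C) \<in> mult less_than"
    by (rule mdec[where I="meas \<Gamma>' C" and K="{#2*wt A, 2*wt B#}" and J="{#2*wt (And A B)#}"])
       (auto simp: G meas_def add_mset_commute)
  ultimately have "CM ?P C" using IHPD[OF IH] by blast
  thus ?thesis by (rule CM_mono_ant) (auto simp: G)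
qed

lemma red_Or:
  assumes IH: "IHP \<Gamma> C" and np: "\<not> G4iSLt \<Gamma> C" and X: "Or A B \<in># \<Gamma>"
  shows "CM \<Gamma> C"
proof -
  obtain \<Gamma>' where G: "\<Gamma> = add_mset (Or A B) \<Gamma>'" using multi_member_split[OF X] by blast
  have "\<not> G4iSLt (add_mset A \<Gamma>') C \<or> \<not> G4iSLt (add_mset B \<Gamma>') C" using np G G4iSLt.OrL by blast
  moreover have "(meas (add_mset A \<Gamma>') C, meas \<Gamma> C) \<in> mult less_than"
    by (rule mdec[where I="meas \<Gamma>' C" and K="{#2*wt A#}" and J="{#2*wt (Or A B)#}"])
       (auto simp: G meas_def add_mset_commute)
  moreover have "(meas (add_mset B \<Gamma>') C, meas \<Gamma> C) \<in> mult less_than"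
    by (rule mdec[where I="meas \<Gamma>' C" and K="{#2*wt B#}" and J="{#2*wt (Or A B)#}"])
       (auto simp: G meas_def add_mset_commute)
  ultimately have "CM (add_mset A \<Gamma>') C \<or> CM (add_mset B \<Gamma>') C" using IHPD[OF IH] by blast
  thus ?thesis
  proof
    assume "CM (add_mset A \<Gamma>') C" thus ?thesis by (rule CM_mono_ant) (auto simp: G)
  next
    assume "CM (add_mset B \<Gamma>') C" thus ?thesis by (rule CM_mono_ant) (auto simp: G)
  qed
qed

lemma red_VarImp:
  assumes IH: "IHP \<Gamma> C" and np: "\<not> G4iSLt \<Gamma> C" and X: "Imp (Var p) A \<in># \<Gamma>" and P: "Var p \<in># \<Gamma>"
  shows "CM \<Gamma> C"
proof -
  obtain \<Gamma>1 where G1: "\<Gamma> = add_mset (Imp (Var p) A) \<Gamma>1" using multi_member_split[OF X] by blast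
  have "Var p \<in># \<Gamma>1" using P G1 by auto
  then obtain \<Gamma>' where G2: "\<Gamma>1 = add_mset (Var p) \<Gamma>'" using multi_member_split[of "Var p" \<Gamma>1] by blast
  have G: "\<Gamma> = add_mset (Var p) (add_mset (Imp (Var p) A) \<Gamma>')" using G1 G2 by (simp add: add_mset_commute)
  let ?P = "add_mset (Var p) (add_mset A \<Gamma>')"
  have "\<not> G4iSLt ?P C" using np G G4iSLt.VarImpL by blast
  moreover have "(meas ?P C, meas \<Gamma> C) \<in> mult less_than"
    by (rule mdec[where I="meas (add_mset (Var p) \<Gamma>') C" and K="{#2*wt A#}" and J="{#2*wt (Imp (Var p) A)#}"])
       (auto simp: G meas_def add_mset_commute)
  ultimately have "CM ?P C" using IHPD[OF IH] by blast
  thus ?thesis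
  proof (rule CM_mono_ant)
    fix M r assume g: "good M" "r \<in> kW M" "\<forall>Y\<in>#?P. sat M r Y"
    have sA: "sat M r A" using g by simp
    have "sat M r (Imp (Var p) A)"
    proof (rule sat_ImpI)
      fix v assume "v \<in> kW M" "kle M r v" "sat M v (Var p)"
      thus "sat M v A" using sat_mono[OF g(1) _ sA] by blast
    qed
    thus "\<forall>Y\<in>#\<Gamma>. sat M r Y" using g G by auto
  qed
qed

lemma red_AndImp:
  assumes IH: "IHP \<Gamma> C" and np: "\<not> G4iSLt \<Gamma> C" and X: "Imp (And A B) D \<in># \<Gamma>"
  shows "CM \<Gamma> C"
proof -
  obtain \<Gamma>' where G: "\<Gamma> = add_mset (Imp (And A B) D) \<Gamma>'" using multi_member_split[OF X] by blast
  let ?P = "add_mset (Imp A (Imp B D)) \<Gamma>'"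
  have "\<not> G4iSLt ?P C" using np G G4iSLt.AndImpL by blast
  moreover have "(meas ?P C, meas \<Gamma> C) \<in> mult less_than"
    by (rule mdec[where I="meas \<Gamma>' C" and K="{#2*wt (Imp A (Imp B D))#}" and J="{#2*wt (Imp (And A B) D)#}"])
       (auto simp: G meas_def add_mset_commute)
  ultimately have "CM ?P C" using IHPD[OF IH] by blast
  thus ?thesis
  proof (rule CM_mono_ant)
    fix M r assume g: "good M" "r \<in> kW M" "\<forall>Y\<in>#?P. sat M r Y"
    have i: "sat M r (Imp A (Imp B D))" using g by auto
    have "sat M r (Imp (And A B) D)"
    proof (rule sat_ImpI)
      fix v assume v: "v \<in> kW M" "kle M r v" "sat M v (And A B)"
      have "sat M v (Imp A (Imp B D))" using sat_mono[OF g(1) v(2) i] .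
      moreover have sA: "sat M v A" and sB: "sat M v B" using v(3) by simp_all
      ultimately have "sat M v (Imp B D)" using sat_imp_refl[OF g(1) v(1)] by blast
      thus "sat M v D" using sat_imp_refl[OF g(1) v(1)] sB by blast
    qed
    thus "\<forall>Y\<in>#\<Gamma>. sat M r Y" using g G by auto
  qed
qed

lemma red_OrImp:
  assumes IH: "IHP \<Gamma> C" and np: "\<not> G4iSLt \<Gamma> C" and X: "Imp (Or A B) D \<in># \<Gamma>"
  shows "CM \<Gamma> C"
proof -
  obtain \<Gamma>' where G: "\<Gamma> = add_mset (Imp (Or A B) D) \<Gamma>'" using multi_member_split[OF X] by blast
  let ?P = "add_mset (Imp A D) (add_mset (Imp B D) \<Gamma>')"
  have "\<not> G4iSLt ?P C" using np G G4iSLt.OrImpL by blast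
  moreover have "(meas ?P C, meas \<Gamma> C) \<in> mult less_than"
    by (rule mdec[where I="meas \<Gamma>' C" and K="{#2*wt (Imp A D), 2*wt (Imp B D)#}" and J="{#2*wt (Imp (Or A B) D)#}"])
       (auto simp: G meas_def add_mset_commute)
  ultimately have "CM ?P C" using IHPD[OF IH] by blast
  thus ?thesis
  proof (rule CM_mono_ant)
    fix M r assume g: "good M" "r \<in> kW M" "\<forall>Y\<in>#?P. sat M r Y"
    have i: "sat M r (Imp A D)" "sat M r (Imp B D)" using g by auto
    have "sat M r (Imp (Or A B) D)"
      by (rule sat_ImpI) (use i in auto)
    thus "\<forall>Y\<in>#\<Gamma>. sat M r Y" using g G by auto
  qed
qed

lemma red_right:
  assumes IH: "IHP \<Gamma> C" and X: "X \<in># \<Gamma>" and np: "\<not> G4iSLt (add_mset D (\<Gamma> - {#X#})) C"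
    and w: "wt D < wt X"
    and sem: "\<And>M r. good M \<Longrightarrow> r \<in> kW M \<Longrightarrow> sat M r D \<Longrightarrow> sat M r X"
  shows "CM \<Gamma> C"
proof -
  obtain \<Gamma>' where G: "\<Gamma> = add_mset X \<Gamma>'" using multi_member_split[OF X] by blast
  have G': "\<Gamma> - {#X#} = \<Gamma>'" using G by simp
  let ?P = "add_mset D \<Gamma>'"
  have "(meas ?P C, meas \<Gamma> C) \<in> mult less_than"
    by (rule mdec[where I="meas \<Gamma>' C" and K="{#2*wt D#}" and J="{#2*wt X#}"])
       (use w in \<open>auto simp: G meas_def add_mset_commute\<close>)
  hence "CM ?P C" using IHPD[OF IH] np G' by auto
  thus ?thesis
  proof (rule CM_mono_ant)
    fix M r assume g: "good M" "r \<in> kW M" "\<forall>Y\<in>#?P. sat M r Y"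
    thus "\<forall>Y\<in>#\<Gamma>. sat M r Y" using G sem by auto
  qed
qed

lemma red_AndR:
  assumes IH: "IHP \<Gamma> C" and np: "\<not> G4iSLt \<Gamma> C" and C: "C = And A B"
  shows "CM \<Gamma> C"
proof -
  have "\<not> G4iSLt \<Gamma> A \<or> \<not> G4iSLt \<Gamma> B" using np C G4iSLt.AndR by blast
  moreover have "(meas \<Gamma> A, meas \<Gamma> C) \<in> mult less_than"
    by (rule mdec[where I="w2 \<Gamma>" and K="{#2*wt A+1#}" and J="{#2*wt C + 1#}"])
       (auto simp: C meas_def)
  moreover have "(meas \<Gamma> B, meas \<Gamma> C) \<in> mult less_than"
    by (rule mdec[where I="w2 \<Gamma>" and K="{#2*wt B+1#}" and J="{#2*wt C + 1#}"])
       (auto simp: C meas_def)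
  ultimately have "CM \<Gamma> A \<or> CM \<Gamma> B" using IHPD[OF IH] by blast
  thus ?thesis unfolding CM_def C by auto
qed

lemma red_ImpR:
  assumes IH: "IHP \<Gamma> C" and np: "\<not> G4iSLt \<Gamma> C" and C: "C = Imp A B"
  shows "CM \<Gamma> C"
proof -
  have "\<not> G4iSLt (add_mset A \<Gamma>) B" using np C G4iSLt.ImpR by blast
  moreover have "(meas (add_mset A \<Gamma>) B, meas \<Gamma> C) \<in> mult less_than"
    by (rule mdec[where I="w2 \<Gamma>" and K="{#2*wt A, 2*wt B+1#}" and J="{#2*wt C + 1#}"])
       (auto simp: C meas_def add_mset_commute)
  ultimately have "CM (add_mset A \<Gamma>) B" using IHPD[OF IH] by blast
  then obtain M r where g: "good M" "rooted M r" "\<forall>Y\<in>#add_mset A \<Gamma>. sat M r Y" "\<not> sat M r B"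
    unfolding CM_def by blast
  have "r \<in> kW M" using g unfolding rooted_def by auto
  hence "\<not> sat M r (Imp A B)" using g goodD(2)[OF g(1)] by auto
  thus ?thesis unfolding CM_def C using g by auto
qed



lemma dom_helper:
  assumes "\<forall>k\<in>#K'. \<exists>j\<in>#J'. k < j"
  shows "\<forall>k\<in>#w2 \<Delta> + K'. \<exists>j\<in>#w2 (boxes \<Delta>) + J'. k < j"
proof
  fix k assume "k \<in># w2 \<Delta> + K'"
  then consider "k \<in># w2 \<Delta>" | "k \<in># K'" by auto
  then show "\<exists>j\<in>#w2 (boxes \<Delta>) + J'. k < j"
  proof cases
    case 1
    then obtain G where G: "G \<in># \<Delta>" "k = 2 * wt G" by auto
    have "Box G \<in># boxes \<Delta>" using G(1) by simp
    hence "2 * wt (Box G) \<in># w2 (boxes \<Delta>)" by (metis image_eqI set_image_mset)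
    moreover have "k < 2 * wt (Box G)" using G(2) by simp
    ultimately show ?thesis by auto
  next
    case 2 then show ?thesis using assms by auto
  qed
qed

lemma okL_ImpImp:
  assumes IH: "IHP \<Gamma> C" and np: "\<not> G4iSLt \<Gamma> C" and X: "Imp (Imp A B) D \<in># \<Gamma>"
    and rp: "G4iSLt (add_mset D (\<Gamma> - {#Imp (Imp A B) D#})) C"
  shows "okL \<Gamma> (Imp (Imp A B) D)"
proof -
  let ?X = "Imp (Imp A B) D"
  let ?G = "\<Gamma> - {#?X#}"
  have G: "\<Gamma> = add_mset ?X ?G" using X by simp
  have "\<not> G4iSLt (add_mset (Imp B D) ?G) (Imp A B)"
  proof
    assume "G4iSLt (add_mset (Imp B D) ?G) (Imp A B)"
    hence "G4iSLt (add_mset ?X ?G) C" using rp G4iSLt.ImpImpL by blast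
    thus False using np G by simp
  qed
  hence n2: "\<not> G4iSLt (add_mset A (add_mset (Imp B D) ?G)) B" using G4iSLt.ImpR by blast
  have "(meas (add_mset A (add_mset (Imp B D) ?G)) B, meas \<Gamma> C) \<in> mult less_than"
    apply (rule mdec[where I="w2 ?G" and K="{#2*wt A, 2*wt (Imp B D), 2*wt B + 1#}" and J="{#2*wt ?X, 2*wt C + 1#}"])
    apply (simp add: meas_def add_mset_commute)
    apply (subst G) apply (simp add: meas_def add_mset_commute)
    by auto
  thus ?thesis using IHPD[OF IH _ n2] by simp
qed

lemma okL_BoxImp:
  assumes IH: "IHP \<Gamma> C" and np: "\<not> G4iSLt \<Gamma> C" and X: "Imp (Box A) B \<in># \<Gamma>"
    and rp: "G4iSLt (add_mset B (\<Gamma> - {#Imp (Box A) B#})) C"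
  shows "okL \<Gamma> (Imp (Box A) B)"
proof -
  let ?X = "Imp (Box A) B"
  let ?G = "\<Gamma> - {#?X#}"
  have eq: "nb ?G + boxes (bx ?G) + {#?X#} = \<Gamma>" using decomp[of ?G, symmetric] X by simp
  have eq2: "nb ?G + boxes (bx ?G) + {#B#} = add_mset B ?G" using decomp[of ?G, symmetric] by simp
  have n2: "\<not> G4iSLt (nb ?G + bx ?G + {#B, Box A#}) A"
  proof
    assume "G4iSLt (nb ?G + bx ?G + {#B, Box A#}) A"
    moreover have "G4iSLt (nb ?G + boxes (bx ?G) + {#B#}) C" using rp eq2 by simp
    ultimately have "G4iSLt (nb ?G + boxes (bx ?G) + {#?X#}) C" using G4iSLt.BoxImpL[OF nb_free] by blast
    thus False using np eq by simp
  qed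
  have e: "meas \<Gamma> C = meas (nb ?G + boxes (bx ?G) + {#?X#}) C" using eq by simp
  have "(meas (nb ?G + bx ?G + {#B, Box A#}) A, meas \<Gamma> C) \<in> mult less_than"
    unfolding e
    apply (rule mdec[where I="w2 (nb ?G)" and K="w2 (bx ?G) + {#2*wt B, 2*wt (Box A), 2*wt A + 1#}"
                       and J="w2 (boxes (bx ?G)) + {#2*wt ?X, 2*wt C + 1#}"])
    subgoal by (simp add: meas_def add_mset_commute ac_simps)
    subgoal by (simp add: meas_def add_mset_commute ac_simps)
    subgoal by simp
    subgoal by (rule dom_helper) auto
    done
  thus ?thesis using IHPD[OF IH _ n2] by simp
qed

lemma okR_Or:
  assumes IH: "IHP \<Gamma> C" and np: "\<not> G4iSLt \<Gamma> C" and C: "C = Or A B"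
  shows "okR \<Gamma> C"
proof -
  have n: "\<not> G4iSLt \<Gamma> A" "\<not> G4iSLt \<Gamma> B" using np C G4iSLt.OrR1 G4iSLt.OrR2 by blast+
  have "(meas \<Gamma> A, meas \<Gamma> C) \<in> mult less_than"
    by (rule mdec[where I="w2 \<Gamma>" and K="{#2*wt A+1#}" and J="{#2*wt C + 1#}"]) (auto simp: C meas_def)
  moreover have "(meas \<Gamma> B, meas \<Gamma> C) \<in> mult less_than"
    by (rule mdec[where I="w2 \<Gamma>" and K="{#2*wt B+1#}" and J="{#2*wt C + 1#}"]) (auto simp: C meas_def)
  ultimately show ?thesis using IHPD[OF IH] n C by simp
qed

lemma okR_Box:
  assumes IH: "IHP \<Gamma> C" and np: "\<not> G4iSLt \<Gamma> C" and C: "C = Box A"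
  shows "okR \<Gamma> C"
proof -
  have n2: "\<not> G4iSLt (nb \<Gamma> + bx \<Gamma> + {#Box A#}) A"
  proof
    assume "G4iSLt (nb \<Gamma> + bx \<Gamma> + {#Box A#}) A"
    hence "G4iSLt (nb \<Gamma> + boxes (bx \<Gamma>)) (Box A)" using G4iSLt.SLtR[OF nb_free] by blast
    thus False using np C decomp[of \<Gamma>, symmetric] by simp
  qed
  have e: "meas \<Gamma> C = meas (nb \<Gamma> + boxes (bx \<Gamma>)) C" using decomp[of \<Gamma>, symmetric] by simp
  have "(meas (nb \<Gamma> + bx \<Gamma> + {#Box A#}) A, meas \<Gamma> C) \<in> mult less_than"
    unfolding e
    apply (rule mdec[where I="w2 (nb \<Gamma>)" and K="w2 (bx \<Gamma>) + {#2*wt (Box A), 2*wt A + 1#}"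
                       and J="w2 (boxes (bx \<Gamma>)) + {#2*wt C + 1#}"])
    subgoal by (simp add: meas_def add_mset_commute ac_simps)
    subgoal by (simp add: meas_def add_mset_commute ac_simps)
    subgoal by simp
    subgoal by (rule dom_helper) (auto simp: C)
    done
  thus ?thesis using IHPD[OF IH _ n2] C by simp
qed



definition redL :: "fm multiset \<Rightarrow> fm \<Rightarrow> fm \<Rightarrow> bool" where
  "redL \<Gamma> C X \<longleftrightarrow> X = Bot \<or> (\<exists>A B. X = And A B \<or> X = Or A B) \<or> (\<exists>p A. X = Imp (Var p) A \<and> Var p \<in># \<Gamma>)
     \<or> (\<exists>A B D. X = Imp (And A B) D \<or> X = Imp (Or A B) D)
     \<or> (\<exists>A B D. X = Imp (Imp A B) D \<and> \<not> G4iSLt (add_mset D (\<Gamma> - {#X#})) C)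
     \<or> (\<exists>A B. X = Imp (Box A) B \<and> \<not> G4iSLt (add_mset B (\<Gamma> - {#X#})) C)"

lemma sat_imp_weak: "good M \<Longrightarrow> sat M r D \<Longrightarrow> sat M r (Imp Y D)"
  by (rule sat_ImpI) (rule sat_mono)

lemma red_case:
  assumes IH: "IHP \<Gamma> C" and np: "\<not> G4iSLt \<Gamma> C" and X: "X \<in># \<Gamma>" and r: "redL \<Gamma> C X"
  shows "CM \<Gamma> C"
  using r unfolding redL_def
proof (elim disjE exE conjE)
  assume "X = Bot"
  then obtain \<Gamma>' where "\<Gamma> = add_mset Bot \<Gamma>'" using multi_member_split[OF X] by blast
  hence "G4iSLt \<Gamma> C" using G4iSLt.BotL by simp
  thus ?thesis using np by simp
next
  fix A B assume "X = And A B" thus ?thesis using red_And[OF IH np] X by simp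
next
  fix A B assume "X = Or A B" thus ?thesis using red_Or[OF IH np] X by simp
next
  fix p A assume "X = Imp (Var p) A" "Var p \<in># \<Gamma>" thus ?thesis using red_VarImp[OF IH np] X by simp
next
  fix A B D assume "X = Imp (And A B) D" thus ?thesis using red_AndImp[OF IH np] X by simp
next
  fix A B D assume "X = Imp (Or A B) D" thus ?thesis using red_OrImp[OF IH np] X by simp
next
  fix A B D assume a: "X = Imp (Imp A B) D" "\<not> G4iSLt (add_mset D (\<Gamma> - {#X#})) C"
  show ?thesis
    apply (rule red_right[OF IH X a(2)])
    subgoal by (simp add: a(1))
    subgoal for M r using sat_imp_weak[of M r D "Imp A B"] a(1) by blast
    done
next
  fix A B assume a: "X = Imp (Box A) B" "\<not> G4iSLt (add_mset B (\<Gamma> - {#X#})) C"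
  show ?thesis
    apply (rule red_right[OF IH X a(2)])
    subgoal by (simp add: a(1))
    subgoal for M r using sat_imp_weak[of M r B "Box A"] a(1) by blast
    done
qed

lemma irred_case:
  assumes IH: "IHP \<Gamma> C" and np: "\<not> G4iSLt \<Gamma> C" and nr: "\<forall>X\<in>#\<Gamma>. \<not> redL \<Gamma> C X"
  shows "CM \<Gamma> C"
proof (cases "\<exists>A B. C = And A B \<or> C = Imp A B")
  case True
  then obtain A B where "C = And A B \<or> C = Imp A B" by blast
  then show ?thesis using red_AndR[OF IH np] red_ImpR[OF IH np] by blast
next
  case False
  have okl: "\<forall>X\<in>#\<Gamma>. okL \<Gamma> X"
  proof
    fix X assume X: "X \<in># \<Gamma>"
    have nX: "\<not> redL \<Gamma> C X" using nr X by blast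
    show "okL \<Gamma> X"
    proof (cases X)
      case (Imp Y Z)
      show ?thesis
      proof (cases Y)
        case (Var p) then show ?thesis using nX Imp unfolding redL_def by auto
      next
        case (Imp A B)
        have rp: "G4iSLt (add_mset Z (\<Gamma> - {#Imp (Imp A B) Z#})) C"
          using nX \<open>X = Imp Y Z\<close> Imp unfolding redL_def by blast
        show ?thesis using okL_ImpImp[OF IH np _ rp] X \<open>X = Imp Y Z\<close> Imp by simp
      next
        case (Box A)
        have rp: "G4iSLt (add_mset Z (\<Gamma> - {#Imp (Box A) Z#})) C"
          using nX \<open>X = Imp Y Z\<close> Box unfolding redL_def by blast
        show ?thesis using okL_BoxImp[OF IH np _ rp] X \<open>X = Imp Y Z\<close> Box by simp
      qed (use nX Imp in \<open>auto simp: redL_def\<close>)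
    qed (use nX in \<open>auto simp: redL_def\<close>)
  qed
  have okr: "okR \<Gamma> C"
  proof (cases C)
    case (Var p)
    have "Var p \<notin># \<Gamma>"
    proof
      assume "Var p \<in># \<Gamma>"
      then obtain \<Gamma>' where "\<Gamma> = add_mset (Var p) \<Gamma>'" using multi_member_split by metis
      thus False using np Var G4iSLt.IdP by simp
    qed
    then show ?thesis using Var by simp
  next
    case (Or A B) then show ?thesis using okR_Or[OF IH np] by simp
  next
    case (Box A) then show ?thesis using okR_Box[OF IH np] by simp
  qed (use False in auto)
  show ?thesis using irred[OF okl okr] .
qed

lemma compl_aux: "\<forall>\<Gamma> C. meas \<Gamma> C = m \<longrightarrow> \<not> G4iSLt \<Gamma> C \<longrightarrow> CM \<Gamma> C"
proof (rule wf_induct[OF wf_mult[OF wf_less_than], of "\<lambda>m. \<forall>\<Gamma> C. meas \<Gamma> C = m \<longrightarrow> \<not> G4iSLt \<Gamma> C \<longrightarrow> CM \<Gamma> C"])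
  fix m assume IHm: "\<forall>y. (y, m) \<in> mult less_than \<longrightarrow> (\<forall>\<Gamma> C. meas \<Gamma> C = y \<longrightarrow> \<not> G4iSLt \<Gamma> C \<longrightarrow> CM \<Gamma> C)"
  show "\<forall>\<Gamma> C. meas \<Gamma> C = m \<longrightarrow> \<not> G4iSLt \<Gamma> C \<longrightarrow> CM \<Gamma> C"
  proof (intro allI impI)
    fix \<Gamma> C assume m: "meas \<Gamma> C = m" and np: "\<not> G4iSLt \<Gamma> C"
    have IH: "IHP \<Gamma> C" unfolding IHP_def using IHm m by blast
    show "CM \<Gamma> C"
    proof (cases "\<exists>X\<in>#\<Gamma>. redL \<Gamma> C X")
      case True
      then obtain X where "X \<in># \<Gamma>" "redL \<Gamma> C X" by blast
      then show ?thesis using red_case[OF IH np] by blast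
    next
      case False
      then show ?thesis using irred_case[OF IH np] by blast
    qed
  qed
qed

lemma compl: "\<not> G4iSLt \<Gamma> C \<Longrightarrow> CM \<Gamma> C"
  using compl_aux by blast

theorem theorem3:
  fixes \<Gamma> :: "fm multiset" and C :: fm
  assumes "G4iSLt_cut \<Gamma> C"
  shows "G4iSLt \<Gamma> C"
proof (rule ccontr)
  assume "\<not> G4iSLt \<Gamma> C"
  then obtain M r where g: "good M" "rooted M r" "\<forall>A\<in>#\<Gamma>. sat M r A" "\<not> sat M r C"
    using compl unfolding CM_def by blast
  have "r \<in> kW M" using g unfolding rooted_def by auto
  thus False using sound[OF assms g(1) _ g(3)] g(4) by blast
qed


end
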